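(* For every $n\geq2$, $$\inf_L \rho_{n,L}=\alpha_n,$$ where the infimum is taken over all sequences $L$ of three positive integers such that $UD_n(L)\neq\emptyset$, and $\alpha_2=1/6$, $\alpha_n=(n-2)/n$ for $n>2$.
   Context: Let $X$ be a finite alphabet with $n\geq 2$ letters and $X^*$ the set of words over $X$; $|v|$ is the length of a word $v$. A code over $X$ is a finite sequence $C=(v_1,\ldots,v_m)$ of words over $X$ such that every $w\in X^*$ has at most one factorization into code-words: if $w=v_{i_1}\cdots v_{i_l}=v_{j_1}\cdots v_{j_{l'}}$ with $l,l'\geq1$, then $l=l'$ and $i_t=j_t$ for all $t$. (Codes are sequences, not sets.) A code $C=(v_1,\ldots,v_m)$ is a prefix code if for all $i,j$, $v_i$ is a prefix of $v_j$ if and only if $i=j$. For a finite sequence $L=(a_1,\ldots,a_m)$ of positive integers, $UD_n(L)$ is the set of all codes $(v_1,\ldots,v_m)$ over an $n$-letter alphabet with $|v_i|=a_i$ for all $i$, $PR_n(L)\subseteq UD_n(L)$ is the subset of prefix codes, and $\rho_{n,L}=|PR_n(L)|/|UD_n(L)|$ (defined when $UD_n(L)\ne\emptyset$). *)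

theory Defs
  imports Complex_Main "HOL-Library.Sublist"
begin

definition word_over :: "nat \<Rightarrow> nat list \<Rightarrow> bool" where
  "word_over n w \<longleftrightarrow> (\<forall>x\<in>set w. x < n)"

definition is_code :: "nat \<Rightarrow> nat list list \<Rightarrow> bool" where
  "is_code n C \<longleftrightarrow> (\<forall>w\<in>set C. word_over n w) \<and>
     (\<forall>is js. is \<noteq> [] \<longrightarrow> js \<noteq> [] \<longrightarrow>
        (\<forall>i\<in>set is. i < length C) \<longrightarrow> (\<forall>j\<in>set js. j < length C) \<longrightarrow>
        concat (map (\<lambda>i. C ! i) is) = concat (map (\<lambda>j. C ! j) js) \<longrightarrow> is = js)"

definition is_prefix_code :: "nat list list \<Rightarrow> bool" where
  "is_prefix_code C \<longleftrightarrow>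
     (\<forall>i<length C. \<forall>j<length C. prefix (C ! i) (C ! j) \<longleftrightarrow> i = j)"

definition UD :: "nat \<Rightarrow> nat list \<Rightarrow> nat list list set" where
  "UD n L = {C. length C = length L \<and> (\<forall>i<length L. length (C ! i) = L ! i) \<and> is_code n C}"

definition PR :: "nat \<Rightarrow> nat list \<Rightarrow> nat list list set" where
  "PR n L = {C \<in> UD n L. is_prefix_code C}"

definition rho :: "nat \<Rightarrow> nat list \<Rightarrow> real" where
  "rho n L = real (card (PR n L)) / real (card (UD n L))"

definition alpha :: "nat \<Rightarrow> real" where
  "alpha n = (if n = 2 then 1 / 6 else (real n - 2) / real n)"

end

theory Submission
  imports Defs
begin

lemma core_SP:
  assumes Cne: "\<forall>v\<in>set C. v \<noteq> []"
    and Dne: "\<forall>d\<in>D. d \<noteq> []"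
    and DC: "D \<inter> set C = {}"
    and cl1: "\<forall>d\<in>D. \<forall>c\<in>set C. \<forall>e. e \<noteq> [] \<longrightarrow> c = d @ e \<longrightarrow> e \<in> D"
    and cl2: "\<forall>d\<in>D. \<forall>c\<in>set C. \<forall>e. e \<noteq> [] \<longrightarrow> d = c @ e \<longrightarrow> e \<in> D"
  shows "d \<in> D \<Longrightarrow> set us \<subseteq> set C \<Longrightarrow> set vs \<subseteq> set C \<Longrightarrow> vs \<noteq> [] \<Longrightarrow> d @ concat us \<noteq> concat vs"
proof (induction "length (concat vs)" arbitrary: d us vs rule: less_induct)
  case less
  then obtain v1 vs' where vs: "vs = v1 # vs'" by (cases vs) auto
  show ?case
  proof
    assume eq: "d @ concat us = concat vs"
    hence eq2: "d @ concat us = v1 @ concat vs'" using vs by simp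
    have v1C: "v1 \<in> set C" using less.prems vs by auto
    have dne: "d \<noteq> []" using Dne less.prems by auto
    have v1ne: "v1 \<noteq> []" using Cne v1C by auto
    from eq2 obtain e where "(v1 = d @ e \<and> concat us = e @ concat vs') \<or> (d = v1 @ e \<and> e @ concat us = concat vs')"
      by (auto simp: append_eq_append_conv2)
    then consider (a) "v1 = d @ e" "concat us = e @ concat vs'" | (b) "d = v1 @ e" "e @ concat us = concat vs'" by blast
    thus False
    proof cases
      case a
      show False
      proof (cases "e = []")
        case True thus False using a DC less.prems v1C by auto
      next
        case False
        have eD: "e \<in> D" using cl1 less.prems(1) v1C False a(1) by blast
        have usne: "us \<noteq> []" using a False by auto
        have "length (concat us) < length (concat vs)" using a vs dne by simp
        have "set vs' \<subseteq> set C" using less.prems(3) vs by auto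
        from less.hyps[OF \<open>length (concat us) < length (concat vs)\<close> eD this less.prems(2) usne] a(2) show False by simp
      qed
    next
      case b
      show False
      proof (cases "e = []")
        case True thus False using b DC less.prems v1C by auto
      next
        case False
        have eD: "e \<in> D" using cl2 less.prems(1) v1C False b(1) by blast
        have vsne: "vs' \<noteq> []" using b False by auto
        have "length (concat vs') < length (concat vs)" using vs v1ne by simp
        have "set vs' \<subseteq> set C" using less.prems(3) vs by auto
        from less.hyps[OF \<open>length (concat vs') < length (concat vs)\<close> eD less.prems(2) this vsne] b(2) show False by simp
      qed
    qed
  qed
qed

lemma SP_code:
  assumes wo: "\<forall>v\<in>set C. word_over n v"
    and Cne: "\<forall>v\<in>set C. v \<noteq> []"
    and dist: "distinct C"
    and Dne: "\<forall>d\<in>D. d \<noteq> []"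
    and DC: "D \<inter> set C = {}"
    and init: "\<And>c1 c2 e. c1 \<in> set C \<Longrightarrow> c2 \<in> set C \<Longrightarrow> e \<noteq> [] \<Longrightarrow> c2 = c1 @ e \<Longrightarrow> e \<in> D"
    and cl1: "\<And>d c e. d \<in> D \<Longrightarrow> c \<in> set C \<Longrightarrow> e \<noteq> [] \<Longrightarrow> c = d @ e \<Longrightarrow> e \<in> D"
    and cl2: "\<And>d c e. d \<in> D \<Longrightarrow> c \<in> set C \<Longrightarrow> e \<noteq> [] \<Longrightarrow> d = c @ e \<Longrightarrow> e \<in> D"
  shows "is_code n C"
proof -
  have cl1': "\<forall>d\<in>D. \<forall>c\<in>set C. \<forall>e. e \<noteq> [] \<longrightarrow> c = d @ e \<longrightarrow> e \<in> D" using cl1 by blast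
  have cl2': "\<forall>d\<in>D. \<forall>c\<in>set C. \<forall>e. e \<noteq> [] \<longrightarrow> d = c @ e \<longrightarrow> e \<in> D" using cl2 by blast
  note core = core_SP[OF Cne Dne DC cl1' cl2']
  have ne: "concat (map (\<lambda>i. C ! i) is) \<noteq> []" if "is \<noteq> []" "\<forall>i\<in>set is. i < length C" for "is"
    using that Cne by (cases "is") auto
  have main: "\<forall>js. (\<forall>i\<in>set is. i < length C) \<longrightarrow> (\<forall>j\<in>set js. j < length C) \<longrightarrow>
        concat (map (\<lambda>i. C ! i) is) = concat (map (\<lambda>j. C ! j) js) \<longrightarrow> is = js" for "is"
  proof (induction "is")
    case Nil
    then show ?case
    proof (intro allI impI)
      fix js assume "\<forall>j\<in>set js. j < length C" "concat (map ((!) C) []) = concat (map ((!) C) js)"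
      thus "[] = js" using ne[of js] by auto
    qed
  next
    case (Cons i is')
    show ?case
    proof (intro allI impI)
      fix js assume iv: "\<forall>i\<in>set (i # is'). i < length C" and jv: "\<forall>j\<in>set js. j < length C"
        and eq: "concat (map (\<lambda>i. C ! i) (i # is')) = concat (map (\<lambda>j. C ! j) js)"
      show "i # is' = js"
      proof (cases js)
        case Nil thus ?thesis using eq ne[of "i#is'"] iv by auto
      next
        case (Cons j js')
        have eq': "C ! i @ concat (map (\<lambda>i. C ! i) is') = C ! j @ concat (map (\<lambda>j. C ! j) js')"
          using eq Cons by simp
        have ci: "C ! i \<in> set C" "C ! j \<in> set C" using iv jv Cons by auto
        have sU: "set (map (\<lambda>i. C ! i) is') \<subseteq> set C" "set (map (\<lambda>j. C ! j) js') \<subseteq> set C"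
          using iv jv Cons by auto
        show ?thesis
        proof (cases "i = j")
          case True
          hence "concat (map ((!) C) is') = concat (map ((!) C) js')" using eq' by simp
          moreover have "\<forall>i\<in>set is'. i < length C" "\<forall>j\<in>set js'. j < length C" using iv jv Cons by auto
          ultimately have "is' = js'" using Cons.IH by blast
          thus ?thesis using True Cons by simp
        next
          case False
          hence neq: "C ! i \<noteq> C ! j" using dist iv jv Cons by (simp add: nth_eq_iff_index_eq)
          let ?X = "concat (map (\<lambda>i. C ! i) is')" and ?Y = "concat (map (\<lambda>j. C ! j) js')"
          from eq'[unfolded append_eq_append_conv2] obtain e where
            "C!i = C!j @ e \<and> e @ ?X = ?Y \<or> C!i @ e = C!j \<and> ?X = e @ ?Y" by blast
          thus ?thesis
          proof
            assume h: "C!i @ e = C!j \<and> ?X = e @ ?Y"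
            hence "e \<noteq> []" using neq by auto
            hence eD: "e \<in> D" using init[OF ci(1) ci(2)] h by auto
            have "map (\<lambda>i. C ! i) is' \<noteq> []" using h \<open>e \<noteq> []\<close> by auto
            thus ?thesis using core[OF eD sU(2) sU(1)] h by auto
          next
            assume h: "C!i = C!j @ e \<and> e @ ?X = ?Y"
            hence "e \<noteq> []" using neq by auto
            hence eD: "e \<in> D" using init[OF ci(2) ci(1)] h by auto
            have "map (\<lambda>j. C ! j) js' \<noteq> []" using h \<open>e \<noteq> []\<close> by auto
            thus ?thesis using core[OF eD sU(1) sU(2)] h by auto
          qed
        qed
      qed
    qed
  qed
  show ?thesis unfolding is_code_def using wo main by blast
qed


definition star :: "'a list set \<Rightarrow> 'a list set" where
  "star X = {concat ks | ks. set ks \<subseteq> X}"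

lemma star_Nil[simp]: "[] \<in> star X"
  unfolding star_def by (auto intro: exI[of _ "[]"])

lemma star_Cons: assumes "k \<in> X" "q \<in> star X" shows "k @ q \<in> star X"
proof -
  obtain ks where "set ks \<subseteq> X" "q = concat ks" using assms(2) unfolding star_def by blast
  thus ?thesis unfolding star_def using assms(1) by (intro CollectI exI[of _ "k#ks"]) auto
qed

lemma star_app: assumes "p \<in> star X" "q \<in> star X" shows "p @ q \<in> star X"
proof -
  obtain ks where ks: "set ks \<subseteq> X" "p = concat ks" using assms(1) unfolding star_def by blast
  obtain ls where ls: "set ls \<subseteq> X" "q = concat ls" using assms(2) unfolding star_def by blast
  show ?thesis unfolding star_def using ks ls by (intro CollectI exI[of _ "ks @ ls"]) auto
qed

lemma star_cases: assumes "q \<in> star X" shows "q = [] \<or> (\<exists>k q''. k \<in> X \<and> q'' \<in> star X \<and> q = k @ q'')"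
proof -
  obtain ks where ks: "set ks \<subseteq> X" "q = concat ks" using assms unfolding star_def by blast
  show ?thesis
  proof (cases ks)
    case Nil thus ?thesis using ks by simp
  next
    case (Cons k ks')
    hence "concat ks' \<in> star X" using ks unfolding star_def by auto
    thus ?thesis using ks Cons by auto
  qed
qed

lemma prefix_code_code:
  assumes wo: "\<forall>v\<in>set C. word_over n v" and ne: "\<forall>v\<in>set C. v \<noteq> []"
    and pc: "is_prefix_code C"
  shows "is_code n C"
proof (rule SP_code[where D="{}"])
  show "distinct C" unfolding distinct_conv_nth using pc unfolding is_prefix_code_def by (metis prefix_order.refl)
  fix c1 c2 e assume "c1 \<in> set C" "c2 \<in> set C" "e \<noteq> []" "c2 = c1 @ e"
  then obtain i j where "i < length C" "j < length C" "c1 = C ! i" "c2 = C ! j" by (auto simp: in_set_conv_nth)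
  hence "prefix (C ! i) (C ! j)" using \<open>c2 = c1 @ e\<close> by (metis prefixI)
  hence "i = j" using pc \<open>i < length C\<close> \<open>j < length C\<close> unfolding is_prefix_code_def by blast
  thus "e \<in> {}" using \<open>e \<noteq> []\<close> \<open>c2 = c1 @ e\<close> \<open>c1 = C ! i\<close> \<open>c2 = C ! j\<close> by simp
qed (use wo ne in auto)

locale pfx2 =
  fixes x y :: "nat list"
  assumes xne: "x \<noteq> []" and yne: "y \<noteq> []" and nxy: "\<not> prefix x y" and nyx: "\<not> prefix y x"
begin

lemma pfree: "k \<in> {x,y} \<Longrightarrow> c \<in> {x,y} \<Longrightarrow> prefix k c \<Longrightarrow> k = c"
  using nxy nyx by auto

lemma comp: "k \<in> {x,y} \<Longrightarrow> c \<in> {x,y} \<Longrightarrow> prefix k s \<Longrightarrow> prefix c s \<Longrightarrow> k = c"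
  using pfree prefix_same_cases by metis

lemma L2:
  assumes q: "q \<in> star {x,y}" and r: "r \<noteq> []" and nr: "\<forall>c\<in>{x,y}. \<not> prefix c r \<and> \<not> prefix r c"
    and c: "c \<in> {x,y}" and pre: "prefix (q @ r) c"
  shows False
proof -
  from star_cases[OF q] show False
  proof
    assume "q = []" thus False using pre nr c by auto
  next
    assume "\<exists>k q''. k \<in> {x,y} \<and> q'' \<in> star {x,y} \<and> q = k @ q''"
    then obtain k q'' where k: "k \<in> {x,y}" "q = k @ q''" by blast
    have "prefix k c" using pre k(2) by (metis append.assoc prefix_def prefix_order.trans)
    hence "k = c" using pfree k c by blast
    thus False using pre k r by (auto simp: prefix_def)
  qed
qed

lemma parse_unique:
  assumes "q1 \<in> star {x,y}" "q2 \<in> star {x,y}" "q1 @ r1 = q2 @ r2"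
    and "\<forall>c\<in>{x,y}. \<not> prefix c r1" "\<forall>c\<in>{x,y}. \<not> prefix c r2"
  shows "q1 = q2"
  using assms
proof (induction "length q1 + length q2" arbitrary: q1 q2 rule: less_induct)
  case less
  show ?case
  proof (cases "q1 = []")
    case True
    show ?thesis
    proof (cases "q2 = []")
      case False
      then obtain k q'' where "k \<in> {x,y}" "q2 = k @ q''" using star_cases[OF less.prems(2)] by blast
      thus ?thesis using less.prems True by auto
    qed (use True in auto)
  next
    case False
    then obtain k q'' where k: "k \<in> {x,y}" "q'' \<in> star {x,y}" "q1 = k @ q''" using star_cases[OF less.prems(1)] by blast
    show ?thesis
    proof (cases "q2 = []")
      case True thus ?thesis using less.prems k by auto
    next
      case False
      then obtain k2 q2'' where k2: "k2 \<in> {x,y}" "q2'' \<in> star {x,y}" "q2 = k2 @ q2''" using star_cases[OF less.prems(2)] by blast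
      have "prefix k (q1 @ r1)" using k(3) by simp
      moreover have "prefix k2 (q1 @ r1)" unfolding less.prems(3) using k2(3) by simp
      ultimately have "k = k2" using comp k k2 by blast
      hence "k @ (q'' @ r1) = k @ (q2'' @ r2)" using less.prems(3) k(3) k2(3) by simp
      hence "q'' @ r1 = q2'' @ r2" by simp
      moreover have "length q'' + length q2'' < length q1 + length q2" using k k2 xne yne by auto
      ultimately have "q'' = q2''" using less.hyps k(2) k2(2) less.prems(4,5) by blast
      thus ?thesis using k k2 \<open>k = k2\<close> by simp
    qed
  qed
qed

lemma ext_code:
  assumes wo: "word_over n x" "word_over n y" "word_over n w"
    and w: "w = q @ r" and q: "q \<in> star {x,y}" and r: "r \<noteq> []"
    and nr: "\<forall>c\<in>{x,y}. \<not> prefix c r \<and> \<not> prefix r c"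
  shows "is_code n [x, y, w]"
proof -
  define D where "D = {e. \<exists>p q'. w = p @ e \<and> p \<noteq> [] \<and> p \<in> star {x,y} \<and> e = q' @ r \<and> q' \<in> star {x,y}}"
  have nr1: "\<forall>c\<in>{x,y}. \<not> prefix c r" using nr by blast
  have nre: "\<forall>c\<in>{x,y}. \<not> prefix c (r @ e)" for e
  proof (intro ballI notI)
    fix c assume c: "c \<in> {x,y}" "prefix c (r @ e)"
    moreover have "prefix r (r @ e)" by simp
    ultimately have "prefix c r \<or> prefix r c" using prefix_same_cases by blast
    thus False using nr c by blast
  qed
  have wx: "w \<noteq> x" "w \<noteq> y"
  proof -
    show "w \<noteq> x" proof assume "w = x" show False by (rule L2[OF q r nr, of x]) (auto simp: w[symmetric] \<open>w = x\<close>) qed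
    show "w \<noteq> y" proof assume "w = y" show False by (rule L2[OF q r nr, of y]) (auto simp: w[symmetric] \<open>w = y\<close>) qed
  qed
  show ?thesis
  proof (rule SP_code[where D=D])
    show "distinct [x, y, w]" using wx nxy by auto
    show "\<forall>v\<in>set [x, y, w]. word_over n v" using wo by auto
    show "\<forall>v\<in>set [x, y, w]. v \<noteq> []" using xne yne w r by auto
    show "\<forall>d\<in>D. d \<noteq> []" using r unfolding D_def by auto
    show "D \<inter> set [x, y, w] = {}"
    proof -
      have "e \<notin> {x,y}" if "e \<in> D" for e
      proof
        assume eX: "e \<in> {x,y}"
        from that obtain q' where "e = q' @ r" "q' \<in> star {x,y}" unfolding D_def by blast
        show False by (rule L2[OF \<open>q' \<in> star {x,y}\<close> r nr eX]) (simp add: \<open>e = q' @ r\<close>)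
      qed
      moreover have "w \<notin> D" unfolding D_def by auto
      ultimately show ?thesis by auto
    qed
  next
    fix c1 c2 e assume c: "c1 \<in> set [x, y, w]" "c2 \<in> set [x, y, w]" "e \<noteq> []" "c2 = c1 @ e"
    show "e \<in> D"
    proof -
      have c2w: "c2 = w"
      proof (rule ccontr)
        assume "c2 \<noteq> w" hence c2X: "c2 \<in> {x,y}" using c by auto
        show False
        proof (cases "c1 = w")
          case True show False by (rule L2[OF q r nr c2X]) (simp add: c(4) True w)
        next
          case False hence "c1 \<in> {x,y}" using c(1) by auto
          hence "c1 = c2" using pfree[of c1 c2] c(4) c2X by simp
          thus False using c by simp
        qed
      qed
      have c1X: "c1 \<in> {x,y}"
      proof -
        have "c1 \<noteq> w" using c c2w by auto
        thus ?thesis using c(1) by simp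
      qed
      show ?thesis
      proof (cases "q = []")
        case True thus ?thesis using c c2w w nr c1X by (auto simp: prefix_def)
      next
        case False
        then obtain k q'' where k: "k \<in> {x,y}" "q'' \<in> star {x,y}" "q = k @ q''" using star_cases[OF q] by blast
        have "prefix k w" using k w by simp
        moreover have "prefix c1 w" using c(4) c2w by (metis prefixI)
        ultimately have "k = c1" using comp k c1X by blast
        hence "e = q'' @ r" using k w c c2w by simp
        thus ?thesis unfolding D_def using k c c2w \<open>k = c1\<close> star_Cons[OF k(1) star_Nil] xne yne
          by (intro CollectI exI[of _ c1] exI[of _ q'']) auto
      qed
    qed
  next
    fix d c e assume d: "d \<in> D" and c: "c \<in> set [x, y, w]" and e: "e \<noteq> []" "c = d @ e"
    show "e \<in> D"
    proof -
      from d obtain p q' where pq: "w = p @ d" "p \<noteq> []" "p \<in> star {x,y}" "d = q' @ r" "q' \<in> star {x,y}"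
        unfolding D_def by blast
      show "e \<in> D"
      proof (cases "c = w")
        case True
        have "q @ r = q' @ (r @ e)" using True e pq w by simp
        hence "q = q'" using parse_unique[OF q pq(5)] nr1 nre by blast
        moreover have "q = p @ q'" using pq w by simp
        ultimately show ?thesis using pq by simp
      next
        case False
        hence "c \<in> {x,y}" using c by auto
        have False by (rule L2[OF pq(5) r nr \<open>c \<in> {x,y}\<close>]) (simp add: e(2) pq(4))
        thus ?thesis by blast
      qed
    qed
  next
    fix d c e assume d: "d \<in> D" and c: "c \<in> set [x, y, w]" and e: "e \<noteq> []" "d = c @ e"
    show "e \<in> D"
    proof -
      from d obtain p q' where pq: "w = p @ d" "p \<noteq> []" "p \<in> star {x,y}" "d = q' @ r" "q' \<in> star {x,y}"
        unfolding D_def by blast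
      show "e \<in> D"
      proof (cases "c = w")
        case True
        have "length d = length w + length e" using e True by simp
        moreover have "length w = length p + length d" using pq by simp
        ultimately show ?thesis using pq(2) e(1) by simp
      next
        case False
        hence cX: "c \<in> {x,y}" using c by auto
        show ?thesis
        proof (cases "q' = []")
          case True thus ?thesis using pq e cX nr by (auto simp: prefix_def)
        next
          case False
          then obtain k q'' where k: "k \<in> {x,y}" "q'' \<in> star {x,y}" "q' = k @ q''" using star_cases[OF pq(5)] by blast
          have "prefix k d" using k pq by simp
          moreover have "prefix c d" using e(2) by (metis prefixI)
          ultimately have "k = c" using comp k cX by blast
          hence "e = q'' @ r" using k pq e by simp
          moreover have "w = (p @ c) @ e" using pq e by simp
          moreover have "p @ c \<in> star {x,y}" using star_app[OF pq(3) star_Cons[OF cX star_Nil]] by simp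
          ultimately show ?thesis unfolding D_def using pq k(2) by blast
        qed
      qed
    qed
  qed
qed

end


lemma code_rev: assumes "is_code n C" shows "is_code n (map rev C)"
  unfolding is_code_def
proof (intro conjI allI impI)
  show "\<forall>w\<in>set (map rev C). word_over n w" using assms unfolding is_code_def word_over_def by auto
  fix "is" js assume ne: "is \<noteq> []" "js \<noteq> []" and iv: "\<forall>i\<in>set is. i < length (map rev C)"
    and jv: "\<forall>j\<in>set js. j < length (map rev C)"
    and eq: "concat (map (\<lambda>i. map rev C ! i) is) = concat (map (\<lambda>j. map rev C ! j) js)"
  have r: "rev (concat (map (\<lambda>i. map rev C ! i) ks)) = concat (map (\<lambda>i. C ! i) (rev ks))"
    if "\<forall>i\<in>set ks. i < length C" for ks
  proof -
    have m: "map (\<lambda>x. rev (map rev C ! x)) (rev ks) = map ((!) C) (rev ks)" using that by (intro map_cong) auto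
    have "rev (concat (map (\<lambda>i. map rev C ! i) ks)) = concat (map (\<lambda>x. rev (map rev C ! x)) (rev ks))"
      by (simp only: rev_concat rev_map map_map o_def)
    also have "\<dots> = concat (map ((!) C) (rev ks))" by (rule arg_cong[where f=concat, OF m])
    finally show ?thesis .
  qed
  have ce: "concat (map (\<lambda>i. C ! i) (rev is)) = concat (map (\<lambda>i. C ! i) (rev js))"
    using r[of "is"] r[of js] eq iv jv by simp
  have cc: "\<And>is js. is\<noteq>[] \<Longrightarrow> js\<noteq>[] \<Longrightarrow> (\<forall>i\<in>set is. i<length C) \<Longrightarrow> (\<forall>j\<in>set js. j<length C) \<Longrightarrow>
     concat (map (\<lambda>i. C ! i) is) = concat (map (\<lambda>i. C ! i) js) \<Longrightarrow> is = js" using assms unfolding is_code_def by blast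
  have "rev is = rev js" by (rule cc) (use ne iv jv ce in auto)
  thus "is = js" by simp
qed

lemma code_single:
  assumes "is_code n C" "i < length C" "\<forall>j\<in>set js. j < length C" "js \<noteq> []"
    and "concat (map (\<lambda>j. C ! j) js) = C ! i"
  shows "js = [i]"
proof -
  have "[i] = js" using assms unfolding is_code_def
    by (metis (no_types, lifting) concat.simps append_Nil2 empty_iff list.map(1,2) list.set(1,2) insert_iff not_Cons_self2)
  thus ?thesis by simp
qed

lemma code_perm:
  assumes c: "is_code n C" and d: "distinct p" and pv: "\<forall>i\<in>set p. i < length C"
  shows "is_code n (map (\<lambda>i. C ! i) p)"
  unfolding is_code_def
proof (intro conjI allI impI)
  show "\<forall>w\<in>set (map (\<lambda>i. C ! i) p). word_over n w" using c pv unfolding is_code_def by auto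
  fix "is" js assume ne: "is \<noteq> []" "js \<noteq> []" and iv: "\<forall>i\<in>set is. i < length (map (\<lambda>i. C ! i) p)"
    and jv: "\<forall>j\<in>set js. j < length (map (\<lambda>i. C ! i) p)"
    and eq: "concat (map (\<lambda>i. map (\<lambda>i. C ! i) p ! i) is) = concat (map (\<lambda>j. map (\<lambda>i. C ! i) p ! j) js)"
  have r: "map (\<lambda>i. map (\<lambda>i. C ! i) p ! i) ks = map (\<lambda>i. C ! i) (map (\<lambda>i. p ! i) ks)"
    if "\<forall>i\<in>set ks. i < length p" for ks
    using that by (induction ks) auto
  have iv': "\<forall>i\<in>set is. i < length p" and jv': "\<forall>i\<in>set js. i < length p" using iv jv by auto
  have "concat (map (\<lambda>i. C ! i) (map (\<lambda>i. p ! i) is)) = concat (map (\<lambda>i. C ! i) (map (\<lambda>i. p ! i) js))"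
    using eq unfolding r[OF iv'] r[OF jv'] .
  moreover have "\<forall>i\<in>set (map (\<lambda>i. p ! i) is). i < length C" "\<forall>i\<in>set (map (\<lambda>i. p ! i) js). i < length C"
    using iv jv pv by auto
  ultimately have "map (\<lambda>i. p ! i) is = map (\<lambda>i. p ! i) js"
    using c ne unfolding is_code_def by (metis Nil_is_map_conv)
  moreover have "inj_on (\<lambda>i. p ! i) (set is \<union> set js)"
    using inj_on_nth[OF d, of "set is \<union> set js"] iv jv by auto
  ultimately show "is = js" using map_inj_on by blast
qed

lemma prefix_perm:
  assumes c: "is_prefix_code C" and d: "distinct p" and pv: "\<forall>i\<in>set p. i < length C"
  shows "is_prefix_code (map (\<lambda>i. C ! i) p)"
  unfolding is_prefix_code_def
proof (intro allI impI)
  fix i j assume ij: "i < length (map (\<lambda>i. C ! i) p)" "j < length (map (\<lambda>i. C ! i) p)"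
  hence "prefix (C ! (p!i)) (C ! (p!j)) \<longleftrightarrow> p!i = p!j" using c pv unfolding is_prefix_code_def by auto
  moreover have "p!i = p!j \<longleftrightarrow> i = j" using d ij by (simp add: nth_eq_iff_index_eq)
  ultimately show "prefix (map (\<lambda>i. C ! i) p ! i) (map (\<lambda>i. C ! i) p ! j) \<longleftrightarrow> i = j" using ij by simp
qed

lemma perm_UD:
  assumes d: "distinct p" and pv: "\<forall>i\<in>set p. i < length L" and C: "C \<in> UD n L"
  shows "map (\<lambda>i. C ! i) p \<in> UD n (map (\<lambda>i. L ! i) p)"
  using C code_perm[OF _ d] pv unfolding UD_def by auto

lemma perm_PR:
  assumes d: "distinct p" and pv: "\<forall>i\<in>set p. i < length L" and C: "C \<in> PR n L"
  shows "map (\<lambda>i. C ! i) p \<in> PR n (map (\<lambda>i. L ! i) p)"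
  using C perm_UD[OF d pv] prefix_perm[OF _ d] pv unfolding PR_def UD_def by auto

lemma swap_card:
  assumes p: "p = [1,0,2] \<or> p = [0,2,1]" and L: "length L = 3"
  shows "card (UD n (map (\<lambda>i. L ! i) p)) = card (UD n L)"
    "card (PR n (map (\<lambda>i. L ! i) p)) = card (PR n L)"
proof -
  let ?f = "\<lambda>C. map (\<lambda>i. C ! i) p"
  have d: "distinct p" and pv: "\<forall>i\<in>set p. i < 3" using p by auto
  have inv: "?f (?f C) = C" if "length C = 3" for C :: "'a list"
    using p that by (auto simp: numeral_3_eq_3 length_Suc_conv)
  have lenU: "length C = 3" if "C \<in> UD n L'" "length L' = 3" for C L' using that unfolding UD_def by auto
  have lenP: "length C = 3" if "C \<in> PR n L'" "length L' = 3" for C L' using that unfolding PR_def UD_def by auto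
  have L': "length (?f L) = 3" using p by auto
  have invL: "?f (?f L) = L" using inv L .
  have "?f ` UD n L = UD n (?f L)"
  proof
    show "?f ` UD n L \<subseteq> UD n (?f L)" using perm_UD[OF d] pv L by auto
    show "UD n (?f L) \<subseteq> ?f ` UD n L"
    proof
      fix C assume "C \<in> UD n (?f L)"
      hence "?f C \<in> UD n (?f (?f L))" using perm_UD[OF d] pv L' by auto
      moreover have "C = ?f (?f C)" by (rule sym, rule inv, rule lenU[OF \<open>C \<in> UD n (?f L)\<close> L'])
      ultimately show "C \<in> ?f ` UD n L" using invL by auto
    qed
  qed
  moreover have "inj_on ?f (UD n L)" by (rule inj_on_inverseI[where g="?f"]) (use inv lenU L in auto)
  ultimately show "card (UD n (?f L)) = card (UD n L)" by (metis card_image)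
  have "?f ` PR n L = PR n (?f L)"
  proof
    show "?f ` PR n L \<subseteq> PR n (?f L)" using perm_PR[OF d] pv L by auto
    show "PR n (?f L) \<subseteq> ?f ` PR n L"
    proof
      fix C assume "C \<in> PR n (?f L)"
      hence "?f C \<in> PR n (?f (?f L))" using perm_PR[OF d] pv L' by auto
      moreover have "C = ?f (?f C)" by (rule sym, rule inv, rule lenP[OF \<open>C \<in> PR n (?f L)\<close> L'])
      ultimately show "C \<in> ?f ` PR n L" using invL by auto
    qed
  qed
  moreover have "inj_on ?f (PR n L)" by (rule inj_on_inverseI[where g="?f"]) (use inv lenP L in auto)
  ultimately show "card (PR n (?f L)) = card (PR n L)" by (metis card_image)
qed

lemma swap01: "card (UD n [b,a,c]) = card (UD n [a,b,c])" "card (PR n [b,a,c]) = card (PR n [a,b,c])"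
  using swap_card[of "[1,0,2]" "[a,b,c]" n] by auto
lemma swap12: "card (UD n [a,c,b]) = card (UD n [a,b,c])" "card (PR n [a,c,b]) = card (PR n [a,b,c])"
  using swap_card[of "[0,2,1]" "[a,b,c]" n] by auto


definition Wd :: "nat \<Rightarrow> nat \<Rightarrow> nat list set" where
  "Wd n l = {w. length w = l \<and> word_over n w}"

lemma Wd_eq: "Wd n l = {w. set w \<subseteq> {..<n} \<and> length w = l}"
  by (auto simp: Wd_def word_over_def)

lemma finite_Wd[simp]: "finite (Wd n l)"
  unfolding Wd_eq by (rule finite_lists_length_eq) simp

lemma card_Wd: "card (Wd n l) = n ^ l"
  unfolding Wd_eq by (subst card_lists_length_eq) simp_all

lemma card_Ext: assumes "u \<in> Wd n a" "a \<le> c" shows "card {w\<in>Wd n c. prefix u w} = n^(c-a)"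
proof -
  have "{w\<in>Wd n c. prefix u w} = (\<lambda>r. u @ r) ` Wd n (c - a)"
  proof
    show "{w \<in> Wd n c. prefix u w} \<subseteq> (@) u ` Wd n (c - a)"
    proof
      fix w assume "w \<in> {w \<in> Wd n c. prefix u w}"
      then obtain r where "w = u @ r" "w \<in> Wd n c" by (auto simp: prefix_def)
      thus "w \<in> (@) u ` Wd n (c - a)" using assms by (auto simp: Wd_def word_over_def)
    qed
    show "(@) u ` Wd n (c - a) \<subseteq> {w \<in> Wd n c. prefix u w}" using assms by (auto simp: Wd_def word_over_def)
  qed
  moreover have "inj_on (\<lambda>r. u @ r) (Wd n (c - a))" by (auto simp: inj_on_def)
  ultimately show ?thesis by (simp add: card_image card_Wd)
qed

definition trip :: "'a \<times> 'a \<times> 'a \<Rightarrow> 'a list" where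
  "trip t = [fst t, fst (snd t), snd (snd t)]"

lemma inj_trip: "inj trip"
  by (auto simp: inj_def trip_def prod_eq_iff)

lemma card_trip: "card (trip ` S) = card S"
  by (rule card_image) (meson inj_trip inj_on_subset subset_UNIV)

lemma card_Sig2:
  assumes "finite A" "\<forall>u\<in>A. finite (B u)" "\<forall>u\<in>A. \<forall>v\<in>B u. finite (Cc u v)"
  shows "card (SIGMA u:A. SIGMA v:B u. Cc u v) = (\<Sum>u\<in>A. \<Sum>v\<in>B u. card (Cc u v))"
  using assms by (simp add: card_SigmaI)

lemma card_Sig2_ge:
  assumes "finite A" "\<forall>u\<in>A. finite (B u)" "\<forall>u\<in>A. \<forall>v\<in>B u. finite (Cc u v)"
    and "\<forall>u\<in>A. card (B u) = M" "\<forall>u\<in>A. \<forall>v\<in>B u. K \<le> card (Cc u v)"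
  shows "card A * M * K \<le> card (SIGMA u:A. SIGMA v:B u. Cc u v)"
proof -
  have "card A * M * K = (\<Sum>u\<in>A. \<Sum>v\<in>B u. K)" using assms(4) by simp
  also have "\<dots> \<le> (\<Sum>u\<in>A. \<Sum>v\<in>B u. card (Cc u v))" using assms(5) by (intro sum_mono) auto
  finally show ?thesis using card_Sig2[OF assms(1-3)] by simp
qed

lemma card_Sig2_le:
  assumes "finite A" "\<forall>u\<in>A. finite (B u)" "\<forall>u\<in>A. \<forall>v\<in>B u. finite (Cc u v)"
    and "\<forall>u\<in>A. card (B u) = M" "\<forall>u\<in>A. \<forall>v\<in>B u. card (Cc u v) \<le> K"
  shows "card (SIGMA u:A. SIGMA v:B u. Cc u v) \<le> card A * M * K"
proof -
  have "(\<Sum>u\<in>A. \<Sum>v\<in>B u. card (Cc u v)) \<le> (\<Sum>u\<in>A. \<Sum>v\<in>B u. K)" using assms(5) by (intro sum_mono) auto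
  also have "\<dots> = card A * M * K" using assms(4) by simp
  finally show ?thesis using card_Sig2[OF assms(1-3)] by simp
qed

lemma UD3: "UD n [a,b,c] = trip ` {(u,v,w). u \<in> Wd n a \<and> v \<in> Wd n b \<and> w \<in> Wd n c \<and> is_code n [u,v,w]}"
proof
  show "UD n [a,b,c] \<subseteq> trip ` {(u,v,w). u \<in> Wd n a \<and> v \<in> Wd n b \<and> w \<in> Wd n c \<and> is_code n [u,v,w]}"
  proof
    fix C assume C: "C \<in> UD n [a,b,c]"
    then obtain u v w where uvw: "C = [u,v,w]" unfolding UD_def by (auto simp: numeral_3_eq_3 length_Suc_conv)
    have "is_code n [u,v,w]" using C uvw unfolding UD_def by auto
    hence "word_over n u" "word_over n v" "word_over n w" unfolding is_code_def by auto
    moreover have "length u = a" "length v = b" "length w = c" using C uvw unfolding UD_def by auto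
    ultimately show "C \<in> trip ` {(u,v,w). u \<in> Wd n a \<and> v \<in> Wd n b \<and> w \<in> Wd n c \<and> is_code n [u,v,w]}"
      using \<open>is_code n [u,v,w]\<close> uvw unfolding Wd_def trip_def by (intro image_eqI[of _ _ "(u,v,w)"]) auto
  qed
  show "trip ` {(u,v,w). u \<in> Wd n a \<and> v \<in> Wd n b \<and> w \<in> Wd n c \<and> is_code n [u,v,w]} \<subseteq> UD n [a,b,c]"
    unfolding UD_def Wd_def trip_def by (auto simp: less_Suc_eq numeral_3_eq_3)
qed

lemma PR3: "PR n [a,b,c] = trip ` {(u,v,w). u \<in> Wd n a \<and> v \<in> Wd n b \<and> w \<in> Wd n c \<and> is_code n [u,v,w] \<and> is_prefix_code [u,v,w]}"
proof -
  have "PR n [a,b,c] = {C \<in> UD n [a,b,c]. is_prefix_code C}" unfolding PR_def by simp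
  also have "\<dots> = trip ` {(u,v,w). u \<in> Wd n a \<and> v \<in> Wd n b \<and> w \<in> Wd n c \<and> is_code n [u,v,w] \<and> is_prefix_code [u,v,w]}"
    unfolding UD3 by (auto simp: trip_def)
  finally show ?thesis .
qed

lemma finite_UD: "finite (UD n [a,b,c])"
proof -
  have "UD n [a,b,c] \<subseteq> trip ` (Wd n a \<times> Wd n b \<times> Wd n c)" unfolding UD3 by auto
  thus ?thesis by (rule finite_subset) auto
qed

lemma card_UD_le: "card (UD n [a,b,c]) \<le> n^a * n^b * n^c"
proof -
  have "UD n [a,b,c] \<subseteq> trip ` (Wd n a \<times> Wd n b \<times> Wd n c)" unfolding UD3 by auto
  hence "card (UD n [a,b,c]) \<le> card (trip ` (Wd n a \<times> Wd n b \<times> Wd n c))" by (intro card_mono) auto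
  thus ?thesis by (simp add: card_trip card_cartesian_product card_Wd)
qed


lemma prefix_len_eq: "prefix v u \<Longrightarrow> length u \<le> length v \<Longrightarrow> v = u"
  by (auto simp: prefix_def)

lemma pc3:
  assumes "length u \<le> length v" "length v \<le> length w"
  shows "is_prefix_code [u,v,w] \<longleftrightarrow> \<not> prefix u v \<and> \<not> prefix u w \<and> \<not> prefix v w"
proof
  assume "is_prefix_code [u,v,w]"
  hence h: "\<forall>i<3. \<forall>j<3. prefix ([u,v,w]!i) ([u,v,w]!j) \<longleftrightarrow> i = j" unfolding is_prefix_code_def by simp
  show "\<not> prefix u v \<and> \<not> prefix u w \<and> \<not> prefix v w"
    using h[rule_format, of 0 1] h[rule_format, of 0 2] h[rule_format, of 1 2] by simp
next
  assume h: "\<not> prefix u v \<and> \<not> prefix u w \<and> \<not> prefix v w"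
  have vu: "\<not> prefix v u" using h prefix_len_eq[of v u] assms by auto
  have wu: "\<not> prefix w u" using h prefix_len_eq[of w u] assms by auto
  have wv: "\<not> prefix w v" using h prefix_len_eq[of w v] assms by auto
  show "is_prefix_code [u,v,w]" unfolding is_prefix_code_def
    using h vu wu wv by (auto simp: less_Suc_eq numeral_3_eq_3)
qed

lemma PR_sorted_set:
  assumes "0 < a" "a \<le> b" "b \<le> c"
  shows "PR n [a,b,c] = trip ` (SIGMA u:Wd n a. SIGMA v:{v\<in>Wd n b. \<not> prefix u v}. {w\<in>Wd n c. \<not> prefix u w \<and> \<not> prefix v w})"
proof -
  have eq: "(is_code n [u,v,w] \<and> is_prefix_code [u,v,w]) \<longleftrightarrow> (\<not> prefix u v \<and> \<not> prefix u w \<and> \<not> prefix v w)"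
    if "u \<in> Wd n a" "v \<in> Wd n b" "w \<in> Wd n c" for u v w
  proof -
    have l: "length u = a" "length v = b" "length w = c" using that by (auto simp: Wd_def)
    have pc: "is_prefix_code [u,v,w] \<longleftrightarrow> (\<not> prefix u v \<and> \<not> prefix u w \<and> \<not> prefix v w)"
      using pc3[of u v w] l assms by simp
    moreover have "is_prefix_code [u,v,w] \<Longrightarrow> is_code n [u,v,w]"
      by (rule prefix_code_code) (use that l assms in \<open>auto simp: Wd_def\<close>)
    ultimately show ?thesis by blast
  qed
  show ?thesis unfolding PR3 using eq by (intro arg_cong[where f="image trip"]) auto
qed

lemma card_good_v:
  assumes "u \<in> Wd n a" "a \<le> b"
  shows "card {v\<in>Wd n b. \<not> prefix u v} = n^b - n^(b-a)"
proof -
  have "{v\<in>Wd n b. \<not> prefix u v} = Wd n b - {v\<in>Wd n b. prefix u v}" by auto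
  moreover have "card (Wd n b - {v\<in>Wd n b. prefix u v}) = n^b - n^(b-a)"
    by (subst card_Diff_subset) (auto simp: card_Wd card_Ext[OF assms])
  ultimately show ?thesis by simp
qed

lemma card_good_w:
  assumes "u \<in> Wd n a" "v \<in> Wd n b" "a \<le> b" "b \<le> c" "\<not> prefix u v"
  shows "card {w\<in>Wd n c. \<not> prefix u w \<and> \<not> prefix v w} = n^c - n^(c-a) - n^(c-b)"
proof -
  let ?E1 = "{w\<in>Wd n c. prefix u w}" and ?E2 = "{w\<in>Wd n c. prefix v w}"
  have lu: "length u \<le> length v" using assms by (auto simp: Wd_def)
  have disj: "?E1 \<inter> ?E2 = {}"
  proof (rule ccontr)
    assume "?E1 \<inter> ?E2 \<noteq> {}"
    then obtain w where "prefix u w" "prefix v w" by auto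
    hence "prefix u v" using prefix_length_prefix lu by blast
    thus False using assms by simp
  qed
  have c1: "card ?E1 = n^(c-a)" using card_Ext[OF assms(1)] assms by simp
  have c2: "card ?E2 = n^(c-b)" using card_Ext[OF assms(2) assms(4)] by simp
  have "card (?E1 \<union> ?E2) = n^(c-a) + n^(c-b)" using card_Un_disjoint[OF _ _ disj] c1 c2 by simp
  moreover have "{w\<in>Wd n c. \<not> prefix u w \<and> \<not> prefix v w} = Wd n c - (?E1 \<union> ?E2)" by auto
  moreover have "card (Wd n c - (?E1 \<union> ?E2)) = n^c - card (?E1 \<union> ?E2)"
    by (subst card_Diff_subset) (auto simp: card_Wd)
  ultimately show ?thesis by simp
qed

lemma card_PR_sorted:
  assumes "0 < a" "a \<le> b" "b \<le> c"
  shows "card (PR n [a,b,c]) = n^a * (n^b - n^(b-a)) * (n^c - n^(c-a) - n^(c-b))"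
proof -
  let ?S = "SIGMA u:Wd n a. SIGMA v:{v\<in>Wd n b. \<not> prefix u v}. {w\<in>Wd n c. \<not> prefix u w \<and> \<not> prefix v w}"
  have "card (PR n [a,b,c]) = card ?S" unfolding PR_sorted_set[OF assms] card_trip ..
  also have "\<dots> = (\<Sum>u\<in>Wd n a. \<Sum>v\<in>{v\<in>Wd n b. \<not> prefix u v}. card {w\<in>Wd n c. \<not> prefix u w \<and> \<not> prefix v w})"
    by (rule card_Sig2) auto
  also have "\<dots> = (\<Sum>u\<in>Wd n a. \<Sum>v\<in>{v\<in>Wd n b. \<not> prefix u v}. n^c - n^(c-a) - n^(c-b))"
    using card_good_w assms by (intro sum.cong refl) auto
  also have "\<dots> = (\<Sum>u\<in>Wd n a. (n^b - n^(b-a)) * (n^c - n^(c-a) - n^(c-b)))"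
    using card_good_v assms by (intro sum.cong refl) auto
  also have "\<dots> = n^a * (n^b - n^(b-a)) * (n^c - n^(c-a) - n^(c-b))" by (simp add: card_Wd)
  finally show ?thesis .
qed


lemma Wd1: "u \<in> Wd n 1 \<longleftrightarrow> (\<exists>x. u = [x] \<and> x < n)"
  by (auto simp: Wd_def word_over_def length_Suc_conv)

lemma concat_letters:
  assumes "set w \<subseteq> {x,y}"
  shows "concat (map (\<lambda>j. [[x],[y],z] ! j) (map (\<lambda>ch. if ch = x then 0::nat else 1) w)) = w"
  using assms by (induction w) auto

lemma letters_star: "\<forall>ch\<in>set q. ch = x \<or> ch = y \<Longrightarrow> q \<in> star {[x],[y]}"
proof (induction q)
  case (Cons a q)
  hence "[a] \<in> {[x],[y]}" "q \<in> star {[x],[y]}" by auto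
  from star_Cons[OF this] show ?case by simp
qed simp

lemma noncode_same: assumes "is_code n [u,v,w]" "u = v" shows False
proof -
  have "[0::nat] = [1]" by (rule code_single[OF assms(1), of 1 "[0]"]) (use assms(2) in auto)
  thus False by simp
qed

lemma noncode_letters:
  assumes "is_code n [[x],[y],w]" "w \<noteq> []" "set w \<subseteq> {x,y}"
  shows False
proof -
  let ?js = "map (\<lambda>ch. if ch = x then 0::nat else 1) w"
  have "?js = [2]"
    by (rule code_single[OF assms(1)]) (use assms concat_letters[OF assms(3), of w] in auto)
  moreover have "\<forall>j\<in>set ?js. j < 2" by auto
  ultimately show False by (metis list.set_intros(1) less_irrefl)
qed

lemma noncode_double: assumes "is_code n [u,v,w]" "v = u @ u" shows False
proof -
  have "[0::nat,0] = [1]" by (rule code_single[OF assms(1), of 1 "[0,0]"]) (use assms(2) in auto)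
  thus False by simp
qed

lemma card_notin2:
  assumes "x < n" "y < n" "x \<noteq> y"
  shows "card {w\<in>Wd n c. \<not> set w \<subseteq> set [x] \<union> set [y]} = n^c - 2^c"
proof -
  have sub: "{w. set w \<subseteq> {x,y} \<and> length w = c} \<subseteq> Wd n c" using assms by (auto simp: Wd_eq)
  have c2: "card {w. set w \<subseteq> {x,y} \<and> length w = c} = 2^c" using assms by (subst card_lists_length_eq) (auto simp: numeral_2_eq_2)
  have "{w\<in>Wd n c. \<not> set w \<subseteq> set [x] \<union> set [y]} = Wd n c - {w. set w \<subseteq> {x,y} \<and> length w = c}"
    by (auto simp: Wd_def)
  thus ?thesis using card_Diff_subset[OF _ sub] c2 finite_lists_length_eq[of "{x,y}" c] by (simp add: card_Wd)
qed

lemma card_vneq: assumes "u \<in> Wd n 1" shows "card {v\<in>Wd n 1. v \<noteq> u} = n - 1"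
proof -
  have "{v\<in>Wd n 1. v \<noteq> u} = Wd n 1 - {u}" by auto
  thus ?thesis using assms by (simp add: card_Wd)
qed

lemma UD11:
  assumes "0 < c"
  shows "UD n [1,1,c] = trip ` (SIGMA u:Wd n 1. SIGMA v:{v\<in>Wd n 1. v \<noteq> u}. {w\<in>Wd n c. \<not> set w \<subseteq> set u \<union> set v})"
  unfolding UD3
proof (intro arg_cong[where f="image trip"] set_eqI iffI)
  fix t assume "t \<in> {(u, v, w). u \<in> Wd n 1 \<and> v \<in> Wd n 1 \<and> w \<in> Wd n c \<and> is_code n [u, v, w]}"
  then obtain u v w where t: "t = (u,v,w)" "u \<in> Wd n 1" "v \<in> Wd n 1" "w \<in> Wd n c" "is_code n [u,v,w]" by auto
  obtain x where x: "u = [x]" using t(2) unfolding Wd1 by blast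
  obtain y where y: "v = [y]" using t(3) unfolding Wd1 by blast
  have uv: "u \<noteq> v" using noncode_same[OF t(5)] by blast
  have wne: "w \<noteq> []" using t(4) assms by (auto simp: Wd_def)
  have nw: "\<not> set w \<subseteq> set u \<union> set v"
  proof
    assume "set w \<subseteq> set u \<union> set v"
    hence "set w \<subseteq> {x,y}" using x y by auto
    show False by (rule noncode_letters[OF _ wne \<open>set w \<subseteq> {x,y}\<close>]) (use t(5) x y in simp)
  qed
  show "t \<in> (SIGMA u:Wd n 1. SIGMA v:{v\<in>Wd n 1. v \<noteq> u}. {w\<in>Wd n c. \<not> set w \<subseteq> set u \<union> set v})"
    using t(1-4) uv nw by simp
next
  fix t assume "t \<in> (SIGMA u:Wd n 1. SIGMA v:{v\<in>Wd n 1. v \<noteq> u}. {w\<in>Wd n c. \<not> set w \<subseteq> set u \<union> set v})"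
  then obtain u v w where t: "t = (u,v,w)" "u \<in> Wd n 1" "v \<in> Wd n 1" "w \<in> Wd n c" "u \<noteq> v"
     "\<not> set w \<subseteq> set u \<union> set v" by auto
  obtain x where x: "u = [x]" "x < n" using t(2) unfolding Wd1 by blast
  obtain y where y: "v = [y]" "y < n" using t(3) unfolding Wd1 by blast
  have xny: "x \<noteq> y" using t(5) x y by auto
  interpret pfx2 "[x]" "[y]" using xny by unfold_locales (auto simp: prefix_def)
  let ?P = "\<lambda>ch. ch = x \<or> ch = y"
  have "\<forall>ch\<in>set (takeWhile ?P w). ?P ch" by (auto dest: set_takeWhileD)
  from letters_star[OF this] have q: "takeWhile ?P w \<in> star {[x],[y]}" .
  have ex: "\<exists>ch\<in>set w. \<not> ?P ch" using t(6) x y by auto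
  have r: "dropWhile ?P w \<noteq> []" using ex by (simp add: dropWhile_eq_Nil_conv)
  then obtain r0 rs where r0: "dropWhile ?P w = r0 # rs" by (cases "dropWhile ?P w") auto
  have "\<not> ?P (hd (dropWhile ?P w))" by (rule hd_dropWhile[OF r])
  hence "\<not> ?P r0" using r0 by simp
  hence nr: "\<forall>cc\<in>{[x],[y]}. \<not> prefix cc (dropWhile ?P w) \<and> \<not> prefix (dropWhile ?P w) cc"
    using r0 by simp
  have wo: "word_over n [x]" "word_over n [y]" "word_over n w" using x y t(4) by (auto simp: Wd_def word_over_def)
  have "is_code n [[x],[y],w]"
    by (rule ext_code[OF wo takeWhile_dropWhile_id[symmetric] q r nr])
  thus "t \<in> {(u, v, w). u \<in> Wd n 1 \<and> v \<in> Wd n 1 \<and> w \<in> Wd n c \<and> is_code n [u, v, w]}"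
    using t(1-4) x y by simp
qed

lemma card_UD11:
  assumes "0 < c"
  shows "card (UD n [1,1,c]) = n * (n - 1) * (n^c - 2^c)"
proof -
  have "card (UD n [1,1,c]) = card (SIGMA u:Wd n 1. SIGMA v:{v\<in>Wd n 1. v \<noteq> u}. {w\<in>Wd n c. \<not> set w \<subseteq> set u \<union> set v})"
    unfolding UD11[OF assms] card_trip ..
  also have "\<dots> = (\<Sum>u\<in>Wd n 1. \<Sum>v\<in>{v\<in>Wd n 1. v \<noteq> u}. card {w\<in>Wd n c. \<not> set w \<subseteq> set u \<union> set v})"
    by (rule card_Sig2) auto
  also have "\<dots> = (\<Sum>u\<in>Wd n 1. \<Sum>v\<in>{v\<in>Wd n 1. v \<noteq> u}. n^c - 2^c)"
  proof (intro sum.cong refl)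
    fix u v assume "u \<in> Wd n 1" "v \<in> {v\<in>Wd n 1. v \<noteq> u}"
    then obtain x y where "u = [x]" "v = [y]" "x < n" "y < n" "x \<noteq> y" using Wd1 by force
    thus "card {w\<in>Wd n c. \<not> set w \<subseteq> set u \<union> set v} = n^c - 2^c" using card_notin2 by simp
  qed
  also have "\<dots> = (\<Sum>u\<in>Wd n 1. (n - 1) * (n^c - 2^c))" using card_vneq by (intro sum.cong refl) auto
  also have "\<dots> = n * (n - 1) * (n^c - 2^c)" by (simp add: card_Wd)
  finally show ?thesis .
qed

lemma card_UD12_le:
  "card (UD n [1,2,c]) \<le> n * (n^2 - 1) * n^c"
proof -
  have "UD n [1,2,c] \<subseteq> trip ` (SIGMA u:Wd n 1. SIGMA v:{v\<in>Wd n 2. v \<noteq> u @ u}. Wd n c)"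
    unfolding UD3 using noncode_double by fastforce
  hence "card (UD n [1,2,c]) \<le> card (SIGMA u:Wd n 1. SIGMA v:{v\<in>Wd n 2. v \<noteq> u @ u}. Wd n c)"
  proof -
    have "finite (trip ` (SIGMA u:Wd n 1. SIGMA v:{v\<in>Wd n 2. v \<noteq> u @ u}. Wd n c))" by (intro finite_imageI finite_SigmaI) auto
    from card_mono[OF this \<open>UD n [1,2,c] \<subseteq> _\<close>] show ?thesis unfolding card_trip .
  qed
  also have "\<dots> \<le> card (Wd n 1) * (n^2 - 1) * n^c"
  proof (rule card_Sig2_le)
    show "\<forall>u\<in>Wd n 1. card {v\<in>Wd n 2. v \<noteq> u @ u} = n^2 - 1"
    proof
      fix u assume "u \<in> Wd n 1"
      hence "u @ u \<in> Wd n 2" by (auto simp: Wd_def word_over_def)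
      moreover have "{v\<in>Wd n 2. v \<noteq> u @ u} = Wd n 2 - {u @ u}" by auto
      ultimately show "card {v\<in>Wd n 2. v \<noteq> u @ u} = n^2 - 1" by (simp add: card_Wd)
    qed
  qed (auto simp: card_Wd)
  finally show ?thesis by (simp add: card_Wd)
qed


lemma star_set: "q \<in> star X \<Longrightarrow> set q \<subseteq> \<Union> (set ` X)"
  unfolding star_def by fastforce

lemma decomp:
  assumes xb: "x \<noteq> b" and s: "s \<in> {x,b}"
  shows "set w \<subseteq> {x,b} \<Longrightarrow> w \<in> star {[x],[b,s]} \<or> (\<exists>q\<in>star {[x],[b,s]}. w = q @ [b]) \<or>
     (\<exists>q s' rest. q \<in> star {[x],[b,s]} \<and> w = q @ (b # s' # rest) \<and> s' \<noteq> s)"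
proof (induction w rule: length_induct)
  case (1 w)
  let ?X = "{[x],[b,s]}"
  show ?case
  proof (cases w)
    case Nil thus ?thesis by simp
  next
    case (Cons a w')
    note wc = Cons
    show ?thesis
    proof (cases "a = x")
      case True
      have "w' \<in> star ?X \<or> (\<exists>q\<in>star ?X. w' = q @ [b]) \<or> (\<exists>q s' rest. q \<in> star ?X \<and> w' = q @ (b # s' # rest) \<and> s' \<noteq> s)"
        using "1.IH" "1.prems" Cons by auto
      moreover have xX: "[x] \<in> ?X" by simp
      ultimately show ?thesis using star_Cons[OF xX] Cons True
        by (metis append_Cons append_Nil append.assoc)
    next
      case False
      hence ab: "a = b" using "1.prems" Cons by auto
      show ?thesis
      proof (cases w')
        case Nil thus ?thesis using wc ab by (intro disjI2 disjI1 bexI[of _ "[]"]) auto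
      next
        case (Cons s2 w'')
        note Cons2 = Cons
        show ?thesis
        proof (cases "s2 = s")
          case True
          have "w'' \<in> star ?X \<or> (\<exists>q\<in>star ?X. w'' = q @ [b]) \<or> (\<exists>q s' rest. q \<in> star ?X \<and> w'' = q @ (b # s' # rest) \<and> s' \<noteq> s)"
            using "1.IH" "1.prems" wc Cons2 by auto
          moreover have vX: "[b,s] \<in> ?X" by simp
          moreover have "w = [b,s] @ w''" using wc Cons2 ab True by simp
          ultimately show ?thesis using star_Cons[OF vX]
            by (metis append.assoc)
        next
          case False
          thus ?thesis using wc Cons2 ab by (intro disjI2 disjI2 exI[of _ "[]"]) auto
        qed
      qed
    qed
  qed
qed

lemma code_third:
  assumes xb: "x \<noteq> b" "x < 2" "b < 2" and s: "s \<in> {x,b}" and q: "q \<in> star {[x],[b,s]}"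
    and w: "w = q @ (b # s' # rest)" "s' \<noteq> s" "word_over 2 w"
  shows "is_code 2 [[x],[b,s],w]"
proof -
  interpret pfx2 "[x]" "[b,s]" using xb by unfold_locales (auto simp: prefix_def)
  show ?thesis
  proof (rule ext_code[OF _ _ w(3) w(1) q])
    show "word_over 2 [x]" "word_over 2 [b,s]" using xb s by (auto simp: word_over_def)
    show "b # s' # rest \<noteq> []" by simp
    show "\<forall>c\<in>{[x], [b, s]}. \<not> prefix c (b # s' # rest) \<and> \<not> prefix (b # s' # rest) c"
      using xb w(2) by auto
  qed
qed

definition Sm :: "nat list \<Rightarrow> nat \<Rightarrow> nat list set" where
  "Sm v m = {w. length w = m \<and> w \<in> star {[hd v], tl v}}"

lemma star_sub:
  fixes x b s :: nat
  assumes "x < 2" "b < 2" "s < 2"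
  shows "{w. length w = m \<and> w \<in> star {[x],[b,s]}} \<subseteq> Wd 2 m"
proof
  fix w assume w: "w \<in> {w. length w = m \<and> w \<in> star {[x],[b,s]}}"
  hence "set w \<subseteq> \<Union> (set ` {[x],[b,s]})" using star_set by blast
  hence "set w \<subseteq> {x,b,s}" by auto
  thus "w \<in> Wd 2 m" using w assms unfolding Wd_def word_over_def by auto
qed

lemma card_star:
  fixes x b s :: nat
  assumes "x < 2" "b < 2" "s < 2"
  shows "real (card {w. length w = m \<and> w \<in> star {[x],[b,s]}}) \<le> (7/4)^m"
proof -
  let ?S = "\<lambda>m. {w. length w = m \<and> w \<in> star {[x],[b,s]}}"
  have fin: "finite (?S m)" for m using star_sub[OF assms] by (rule finite_subset) simp
  have rec: "card (?S (Suc (Suc m))) \<le> card (?S (Suc m)) + card (?S m)" for m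
  proof -
    have "?S (Suc (Suc m)) \<subseteq> (\<lambda>w. [x] @ w) ` ?S (Suc m) \<union> (\<lambda>w. [b,s] @ w) ` ?S m"
    proof
      fix w assume w: "w \<in> ?S (Suc (Suc m))"
      have "w \<noteq> []" using w by auto
      then obtain k q'' where "k \<in> {[x],[b,s]}" "q'' \<in> star {[x],[b,s]}" "w = k @ q''"
        using star_cases[of w "{[x],[b,s]}"] w \<open>w \<noteq> []\<close> by blast
      thus "w \<in> (\<lambda>w. [x] @ w) ` ?S (Suc m) \<union> (\<lambda>w. [b,s] @ w) ` ?S m" using w by auto
    qed
    hence "card (?S (Suc (Suc m))) \<le> card ((\<lambda>w. [x] @ w) ` ?S (Suc m) \<union> (\<lambda>w. [b,s] @ w) ` ?S m)"
      by (intro card_mono) (auto intro: fin)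
    also have "\<dots> \<le> card ((\<lambda>w. [x] @ w) ` ?S (Suc m)) + card ((\<lambda>w. [b,s] @ w) ` ?S m)" by (rule card_Un_le)
    also have "\<dots> \<le> card (?S (Suc m)) + card (?S m)" by (intro add_mono card_image_le fin)
    finally show ?thesis .
  qed
  have c0: "card (?S 0) \<le> 1"
  proof -
    have "?S 0 \<subseteq> {[]}" by auto
    hence "card (?S 0) \<le> card {[]::nat list}" by (intro card_mono) auto
    thus ?thesis by simp
  qed
  have c1: "card (?S 1) \<le> 1"
  proof -
    have "?S 1 \<subseteq> {[x]}"
    proof
      fix w assume w: "w \<in> ?S 1"
      have "w \<noteq> []" using w by auto
      then obtain k q'' where "k \<in> {[x],[b,s]}" "q'' \<in> star {[x],[b,s]}" "w = k @ q''"
        using star_cases[of w "{[x],[b,s]}"] w \<open>w \<noteq> []\<close> by blast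
      thus "w \<in> {[x]}" using w by auto
    qed
    hence "card (?S 1) \<le> card {[x]}" by (intro card_mono) auto
    thus ?thesis by simp
  qed
  have "real (card (?S m)) \<le> (7/4)^m \<and> real (card (?S (Suc m))) \<le> (7/4)^(Suc m)" for m
  proof (induction m)
    case 0 thus ?case using c0 c1 by simp
  next
    case (Suc m)
    have "real (card (?S (Suc (Suc m)))) \<le> real (card (?S (Suc m))) + real (card (?S m))"
      using rec[of m] by linarith
    also have "\<dots> \<le> (7/4)^(Suc m) + (7/4)^m" using Suc by linarith
    also have "\<dots> \<le> (7/4)^(Suc (Suc m))"
    proof -
      have "(7/4::real)^(Suc m) + (7/4)^m = (7/4)^m * (11/4)" by (simp add: algebra_simps)
      also have "\<dots> \<le> (7/4)^m * (49/16)" by (intro mult_left_mono) auto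
      also have "\<dots> = (7/4)^(Suc (Suc m))" by (simp add: algebra_simps)
      finally show ?thesis .
    qed
    finally show ?case using Suc by simp
  qed
  thus ?thesis by simp
qed

lemma card_good:
  assumes xb: "x \<noteq> b" "x < 2" "b < 2" and s: "s \<in> {x,b}" and c: "1 \<le> c"
  shows "real (card {w\<in>Wd 2 c. is_code 2 [[x],[b,s],w]}) \<ge> 2^c - 2 * (7/4)^c"
proof -
  let ?X = "{[x],[b,s]}"
  let ?S = "\<lambda>m. {w. length w = m \<and> w \<in> star ?X}"
  have s2: "s < 2" using s xb by auto
  let ?N = "?S c \<union> (\<lambda>q. q @ [b]) ` ?S (c - 1)"
  have finS: "finite (?S m)" for m using star_sub[OF xb(2,3) s2] by (rule finite_subset) simp
  have sub: "Wd 2 c - ?N \<subseteq> {w\<in>Wd 2 c. is_code 2 [[x],[b,s],w]}"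
  proof
    fix w assume w: "w \<in> Wd 2 c - ?N"
    have sw: "set w \<subseteq> {x,b}" using w xb by (auto simp: Wd_def word_over_def)
    from decomp[OF xb(1) s sw] show "w \<in> {w\<in>Wd 2 c. is_code 2 [[x],[b,s],w]}"
    proof (elim disjE)
      assume "w \<in> star ?X" thus ?thesis using w by (auto simp: Wd_def)
    next
      assume "\<exists>q\<in>star ?X. w = q @ [b]"
      then obtain q where "q \<in> star ?X" "w = q @ [b]" by blast
      moreover have "length q = c - 1" using w \<open>w = q @ [b]\<close> by (auto simp: Wd_def)
      ultimately have "w \<in> ?N" by auto
      thus ?thesis using w by auto
    next
      assume "\<exists>q s' rest. q \<in> star ?X \<and> w = q @ (b # s' # rest) \<and> s' \<noteq> s"
      then obtain q s' rest where "q \<in> star ?X" "w = q @ (b # s' # rest)" "s' \<noteq> s" by blast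
      thus ?thesis using code_third[OF xb s] w by (auto simp: Wd_def)
    qed
  qed
  have "card (Wd 2 c) - card ?N \<le> card (Wd 2 c - ?N)" by (rule diff_card_le_card_Diff) (auto intro: finS)
  also have "\<dots> \<le> card {w\<in>Wd 2 c. is_code 2 [[x],[b,s],w]}" by (rule card_mono[OF _ sub]) simp
  finally have A: "real (card (Wd 2 c)) - real (card ?N) \<le> real (card {w\<in>Wd 2 c. is_code 2 [[x],[b,s],w]})" by linarith
  have "card ?N \<le> card (?S c) + card ((\<lambda>q. q @ [b]) ` ?S (c - 1))" by (rule card_Un_le)
  also have "\<dots> \<le> card (?S c) + card (?S (c - 1))" by (intro add_mono card_image_le finS) simp
  finally have "real (card ?N) \<le> (7/4)^c + (7/4)^(c-1)"
    using card_star[OF xb(2,3) s2, of c] card_star[OF xb(2,3) s2, of "c-1"] by linarith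
  also have "(7/4::real)^(c-1) \<le> (7/4)^c" by (intro power_increasing) auto
  finally have B: "real (card ?N) \<le> 2 * (7/4)^c" by linarith
  show ?thesis using A B by (simp add: card_Wd)
qed

lemma card_good_rev:
  assumes xb: "x \<noteq> b" "x < 2" "b < 2" and c: "1 \<le> c"
  shows "real (card {w\<in>Wd 2 c. is_code 2 [[x],[x,b],w]}) \<ge> 2^c - 2 * (7/4)^c"
proof -
  have "rev ` {w\<in>Wd 2 c. is_code 2 [[x],[b,x],w]} \<subseteq> {w\<in>Wd 2 c. is_code 2 [[x],[x,b],w]}"
  proof
    fix w' assume "w' \<in> rev ` {w\<in>Wd 2 c. is_code 2 [[x],[b,x],w]}"
    then obtain w where w: "w' = rev w" "w \<in> Wd 2 c" "is_code 2 [[x],[b,x],w]" by auto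
    have "is_code 2 (map rev [[x],[b,x],w])" by (rule code_rev[OF w(3)])
    thus "w' \<in> {w\<in>Wd 2 c. is_code 2 [[x],[x,b],w]}" using w by (auto simp: Wd_def word_over_def)
  qed
  hence "card (rev ` {w\<in>Wd 2 c. is_code 2 [[x],[b,x],w]}) \<le> card {w\<in>Wd 2 c. is_code 2 [[x],[x,b],w]}"
    by (intro card_mono) auto
  moreover have "card (rev ` {w\<in>Wd 2 c. is_code 2 [[x],[b,x],w]}) = card {w\<in>Wd 2 c. is_code 2 [[x],[b,x],w]}"
    by (rule card_image) (auto intro: inj_onI)
  ultimately show ?thesis using card_good[OF xb, of x c] c by simp
qed

lemma v_cases:
  assumes "v \<in> Wd 2 2" "v \<noteq> [x,x]" "x < 2"
  shows "v = [1-x, 1-x] \<or> v = [1-x, x] \<or> v = [x, 1-x]"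
proof -
  obtain v0 v1 where v: "v = [v0,v1]" "v0 < 2" "v1 < 2" using assms(1)
    by (auto simp: Wd_def word_over_def numeral_2_eq_2 length_Suc_conv)
  thus ?thesis using assms by auto
qed

lemma card_UD12_ge:
  assumes c: "1 \<le> c"
  shows "real (card (UD 2 [1,2,c])) \<ge> 6 * (2^c - 2 * (7/4)^c)"
proof -
  let ?G = "\<lambda>u v. {w\<in>Wd 2 c. is_code 2 [u,v,w]}"
  let ?Sig = "SIGMA u:Wd 2 1. SIGMA v:{v\<in>Wd 2 2. v \<noteq> u @ u}. ?G u v"
  have "trip ` ?Sig \<subseteq> UD 2 [1,2,c]" unfolding UD3 by auto
  hence "card (trip ` ?Sig) \<le> card (UD 2 [1,2,c])" by (intro card_mono finite_UD)
  hence le: "card ?Sig \<le> card (UD 2 [1,2,c])" by (simp add: card_trip)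
  have "card ?Sig = (\<Sum>u\<in>Wd 2 1. \<Sum>v\<in>{v\<in>Wd 2 2. v \<noteq> u @ u}. card (?G u v))" by (rule card_Sig2) auto
  hence "real (card ?Sig) = (\<Sum>u\<in>Wd 2 1. \<Sum>v\<in>{v\<in>Wd 2 2. v \<noteq> u @ u}. real (card (?G u v)))" by simp
  also have "\<dots> \<ge> (\<Sum>u\<in>Wd 2 1. \<Sum>v\<in>{v\<in>Wd 2 2. v \<noteq> u @ u}. (2^c - 2 * (7/4)^c))"
  proof (intro sum_mono)
    fix u v assume u: "u \<in> Wd 2 1" and v: "v \<in> {v\<in>Wd 2 2. v \<noteq> u @ u}"
    obtain x where x: "u = [x]" "x < 2" using u unfolding Wd1 by blast
    have xb: "x \<noteq> 1 - x" "1 - x < 2" using x by arith+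
    from v_cases[of v x] v x have "v = [1-x, 1-x] \<or> v = [1-x, x] \<or> v = [x, 1-x]" by simp
    thus "2^c - 2 * (7/4)^c \<le> real (card (?G u v))"
      using card_good[OF xb(1) x(2) xb(2), of "1-x" c] card_good[OF xb(1) x(2) xb(2), of x c]
        card_good_rev[OF xb(1) x(2) xb(2) c] x c by auto
  qed
  also have "(\<Sum>u\<in>Wd 2 1. \<Sum>v\<in>{v\<in>Wd 2 2. v \<noteq> u @ u}. (2^c - 2 * (7/4::real)^c)) = 6 * (2^c - 2 * (7/4)^c)"
  proof -
    have "\<forall>u\<in>Wd 2 1. card {v\<in>Wd 2 2. v \<noteq> u @ u} = 3"
    proof
      fix u assume "u \<in> Wd 2 1"
      hence "u @ u \<in> Wd 2 2" by (auto simp: Wd_def word_over_def)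
      moreover have "{v\<in>Wd 2 2. v \<noteq> u @ u} = Wd 2 2 - {u @ u}" by auto
      ultimately show "card {v\<in>Wd 2 2. v \<noteq> u @ u} = 3" by (simp add: card_Wd)
    qed
    thus ?thesis by (simp add: card_Wd)
  qed
  finally show ?thesis using le by linarith
qed


lemma P_real:
  assumes n: "2 \<le> n" and abc: "0 < a" "a \<le> b" "b \<le> c"
  shows "real (card (PR n [a,b,c])) = real n^a * real n^b * real n^c * (1 - 1/real n^a) * (1 - 1/real n^a - 1/real n^b)"
proof -
  define N where "N = real n"
  have N: "N \<ge> 2" using n unfolding N_def by simp
  have N0: "N \<noteq> 0" using N by simp
  have i1: "n^(b-a) \<le> n^b" using n by (intro power_increasing) auto
  have i2: "n^(c-a) \<le> n^(c-1)" "n^(c-b) \<le> n^(c-1)" using n abc by (auto intro: power_increasing)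
  have i3: "2 * n^(c-1) \<le> n^c"
  proof -
    have "2 * n^(c-1) \<le> n * n^(c-1)" using n by simp
    also have "\<dots> = n^c" using abc by (metis Suc_diff_1 less_le_trans power_Suc le_trans)
    finally show ?thesis .
  qed
  have i4: "n^(c-a) + n^(c-b) \<le> n^c" using i2 i3 by linarith
  have "real (card (PR n [a,b,c])) = N^a * (N^b - N^(b-a)) * (N^c - N^(c-a) - N^(c-b))"
    unfolding card_PR_sorted[OF abc] N_def using i1 i4
    by (simp add: of_nat_diff)
  also have "N^(b-a) = N^b / N^a" using abc N0 by (simp add: power_diff)
  also have "N^(c-a) = N^c / N^a" using abc N0 by (simp add: power_diff)
  also have "N^(c-b) = N^c / N^b" using abc N0 by (simp add: power_diff)
  also have "N^a * (N^b - N^b / N^a) * (N^c - N^c / N^a - N^c / N^b) =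
      N^a * N^b * N^c * (1 - 1/N^a) * (1 - 1/N^a - 1/N^b)"
    using N0 by (simp add: field_simps)
  finally show ?thesis unfolding N_def .
qed

lemma rho_ge:
  assumes "0 < real (card (UD n L))" "real (card (UD n L)) \<le> Ub" "0 \<le> real (card (PR n L))"
  shows "real (card (PR n L)) / Ub \<le> rho n L"
  unfolding rho_def using assms by (intro divide_left_mono) auto

lemma lower_sorted:
  assumes n: "2 \<le> n" and abc: "0 < a" "a \<le> b" "b \<le> c" and U: "0 < card (UD n [a,b,c])"
  shows "alpha n \<le> rho n [a,b,c]"
proof -
  define N where "N = real n"
  have N: "N \<ge> 2" using n unfolding N_def by simp
  define x where "x = 1 / N^a"
  define y where "y = 1 / N^b"
  have P: "real (card (PR n [a,b,c])) = N^a * N^b * N^c * (1 - x) * (1 - x - y)"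
    using P_real[OF n abc] unfolding N_def x_def y_def .
  have Npos: "N^a > 0" "N^b > 0" "N^c > 0" using N by auto
  have NaN: "N^a \<ge> N"
  proof -
    have "N^1 \<le> N^a" using N abc by (intro power_increasing) auto
    thus ?thesis by simp
  qed
  have xpos: "0 < x" "x \<le> 1/N" using N NaN unfolding x_def
    by (auto intro: divide_left_mono)
  have ypos: "0 < y" "y \<le> x" using N abc unfolding x_def y_def by (auto simp: divide_simps intro: power_increasing)
  have UR: "0 < real (card (UD n [a,b,c]))" using U by simp
  have UB: "real (card (UD n [a,b,c])) \<le> N^a * N^b * N^c"
  proof -
    have "real (card (UD n [a,b,c])) \<le> real (n^a * n^b * n^c)" using card_UD_le[of n a b c] by (simp only: of_nat_le_iff)
    thus ?thesis unfolding N_def by simp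
  qed
  have "1/N \<le> 1/2" using N by simp
  hence x12: "x \<le> 1/2" using xpos by linarith
  have Pnn: "0 \<le> real (card (PR n [a,b,c]))" by simp
  show ?thesis
  proof (cases "a = 1")
    case False
    hence a2: "a \<ge> 2" using abc by simp
    have "N^a \<ge> N^2" using N a2 by (intro power_increasing) auto
    hence xN: "x \<le> 1/N^2" unfolding x_def using N by (intro divide_left_mono) auto
    have "(1 - x) * (1 - x - y) = 1 - 2*x - y + x*x + x*y" by (simp add: algebra_simps)
    also have "\<dots> \<ge> 1 - 3 * x" using xpos ypos mult_nonneg_nonneg[of x x] mult_nonneg_nonneg[of x y] by linarith
    finally have f1: "(1 - x) * (1 - x - y) \<ge> 1 - 3/N^2" using xN by linarith
    have al: "alpha n \<le> 1 - 3/N^2"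
    proof (cases "n = 2")
      case True thus ?thesis unfolding alpha_def N_def by simp
    next
      case False
      hence "N \<ge> 3" using n unfolding N_def by simp
      hence "3/N^2 \<le> 2/N" using N by (simp add: divide_simps power2_eq_square)
      thus ?thesis using False unfolding alpha_def N_def by (simp add: diff_divide_distrib)
    qed
    have "real (card (PR n [a,b,c])) / (N^a * N^b * N^c) = (1 - x) * (1 - x - y)"
      using P Npos N by simp
    hence "alpha n \<le> real (card (PR n [a,b,c])) / (N^a * N^b * N^c)" using f1 al by linarith
    also have "\<dots> \<le> rho n [a,b,c]" by (rule rho_ge[OF UR UB Pnn])
    finally show ?thesis .
  next
    case a1: True
    have x1: "x = 1/N" unfolding x_def a1 by simp
    show ?thesis
    proof (cases "b = 1")
      case b1: True
      have c0: "0 < c" using abc by simp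
      have UD: "card (UD n [1,1,c]) = n * (n - 1) * (n^c - 2^c)" by (rule card_UD11[OF c0])
      show ?thesis
      proof (cases "n = 2")
        case True thus ?thesis using U UD a1 b1 by simp
      next
        case False
        hence n3: "N \<ge> 3" using n unfolding N_def by simp
        have "n^c - 2^c \<le> n^c" by simp
        hence "card (UD n [1,1,c]) \<le> n * (n - 1) * n^c" unfolding UD by simp
        hence "real (card (UD n [1,1,c])) \<le> real (n * (n - 1) * n^c)" by (simp only: of_nat_le_iff)
        hence UB2: "real (card (UD n [a,b,c])) \<le> N * (N - 1) * N^c" using a1 b1 n unfolding N_def
          by (simp add: of_nat_diff)
        have yx: "y = 1/N" unfolding y_def b1 by simp
        have e1: "N*(1-1/N) = N-1" using N by (simp add: field_simps)
        have e2: "N*(1-1/N-1/N) = N-2" using N by (simp add: field_simps)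
        have "real (card (PR n [a,b,c])) = N*N*N^c*(1-1/N)*(1-1/N-1/N)" using P a1 b1 x1 yx by simp
        also have "\<dots> = N^c*(N*(1-1/N))*(N*(1-1/N-1/N))" by (simp only: mult.assoc mult.commute mult.left_commute)
        finally have Pv: "real (card (PR n [a,b,c])) = N^c * (N - 1) * (N - 2)" unfolding e1 e2 .
        have "real (card (PR n [a,b,c])) / (N * (N - 1) * N^c) = (N - 2) / N"
          unfolding Pv using N Npos by (simp add: field_simps)
        moreover have "alpha n = (N - 2) / N" using False unfolding alpha_def N_def by simp
        ultimately have "alpha n = real (card (PR n [a,b,c])) / (N * (N - 1) * N^c)" by simp
        also have "\<dots> \<le> rho n [a,b,c]" by (rule rho_ge[OF UR UB2 Pnn])
        finally show ?thesis .
      qed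
    next
      case False
      hence b2: "b \<ge> 2" using abc by simp
      have "N^b \<ge> N^2" using N b2 by (intro power_increasing) auto
      hence yN: "y \<le> 1/N^2" unfolding y_def using N by (intro divide_left_mono) auto
      show ?thesis
      proof (cases "n = 2")
        case n2: True
        show ?thesis
        proof (cases "b = 2")
          case b2': True
          have c2: "2 \<le> c" using abc b2' by simp
          have "card (UD n [a,b,c]) \<le> 6 * 2^c"
            using card_UD12_le[of 2 c] n2 a1 b2' by simp
          hence "real (card (UD n [a,b,c])) \<le> real (6 * 2^c)" by (simp only: of_nat_le_iff)
          hence UB2: "real (card (UD n [a,b,c])) \<le> 6 * 2^c" by simp
          have Pv: "real (card (PR n [a,b,c])) = 2^c"
            using P a1 b2' n2 unfolding x_def y_def N_def by (simp add: field_simps)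
          have "alpha n = real (card (PR n [a,b,c])) / (6 * 2^c)" unfolding Pv alpha_def using n2 by simp
          also have "\<dots> \<le> rho n [a,b,c]" by (rule rho_ge[OF UR UB2 Pnn])
          finally show ?thesis .
        next
          case False
          hence "b \<ge> 3" using b2 by simp
          hence "N^b \<ge> N^3" using N by (intro power_increasing) auto
          hence "y \<le> 1/8" unfolding y_def using n2 N_def by (simp add: divide_simps)
          hence f1: "(1 - x) * (1 - x - y) \<ge> 1/6" unfolding x1 using n2 N_def by (simp add: field_simps)
          have "real (card (PR n [a,b,c])) / (N^a * N^b * N^c) = (1 - x) * (1 - x - y)"
            using P Npos N by simp
          hence "alpha n \<le> real (card (PR n [a,b,c])) / (N^a * N^b * N^c)" using f1 n2 unfolding alpha_def by simp
          also have "\<dots> \<le> rho n [a,b,c]" by (rule rho_ge[OF UR UB Pnn])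
          finally show ?thesis .
        qed
      next
        case False
        hence n3: "N \<ge> 3" using n unfolding N_def by simp
        have "1 - 1/N \<ge> 0" using N by simp
        hence m: "(1 - 1/N) * (1 - 1/N - 1/N^2) \<le> (1 - x) * (1 - x - y)" unfolding x1 using yN
          by (intro mult_left_mono) auto
        have "1 - 2/N \<le> 1 - 2/N + 1/N^3" using N by simp
        also have "\<dots> = (1 - 1/N) * (1 - 1/N - 1/N^2)" using N
          by (simp add: field_simps power2_eq_square power3_eq_cube)
        also have "\<dots> \<le> (1 - x) * (1 - x - y)" by (rule m)
        finally have f1: "(1 - x) * (1 - x - y) \<ge> 1 - 2/N" .
        have "real (card (PR n [a,b,c])) / (N^a * N^b * N^c) = (1 - x) * (1 - x - y)"
          using P Npos N by simp
        moreover have "alpha n = 1 - 2/N" using False N unfolding alpha_def N_def by (simp add: field_simps)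
        ultimately have "alpha n \<le> real (card (PR n [a,b,c])) / (N^a * N^b * N^c)" using f1 by simp
        also have "\<dots> \<le> rho n [a,b,c]" by (rule rho_ge[OF UR UB Pnn])
        finally show ?thesis .
      qed
    qed
  qed
qed


lemma rho_cards: "card (UD n L) = card (UD n L') \<Longrightarrow> card (PR n L) = card (PR n L') \<Longrightarrow> rho n L = rho n L'"
  unfolding rho_def by simp

lemma sort3:
  assumes "0 < a" "0 < b" "0 < c"
  shows "\<exists>a' b' c'. 0 < a' \<and> a' \<le> b' \<and> b' \<le> c' \<and> card (UD n [a,b,c]) = card (UD n [a',b',c']) \<and> rho n [a,b,c] = rho n [a',b',c']"
proof -
  have s01: "card (UD n [b,a,c]) = card (UD n [a,b,c])" "rho n [b,a,c] = rho n [a,b,c]" for a b c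
    using swap01 rho_cards by metis+
  have s12: "card (UD n [a,c,b]) = card (UD n [a,b,c])" "rho n [a,c,b] = rho n [a,b,c]" for a b c
    using swap12 rho_cards by metis+
  consider "a \<le> b" "b \<le> c" | "a \<le> c" "c < b" | "b < a" "a \<le> c" | "b \<le> c" "c < a" | "c < a" "a \<le> b" | "c < b" "b < a"
    by linarith
  thus ?thesis
  proof cases
    case 1 thus ?thesis using assms by blast
  next
    case 2 thus ?thesis using assms s12[of a b c] by (intro exI[of _ a] exI[of _ c] exI[of _ b]) auto
  next
    case 3 thus ?thesis using assms s01[of a b c] by (intro exI[of _ b] exI[of _ a] exI[of _ c]) auto
  next
    case 4 thus ?thesis using assms s01[of a b c] s12[of b a c] by (intro exI[of _ b] exI[of _ c] exI[of _ a]) auto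
  next
    case 5 thus ?thesis using assms s12[of a b c] s01[of a c b] by (intro exI[of _ c] exI[of _ a] exI[of _ b]) auto
  next
    case 6 thus ?thesis using assms s01[of a b c] s12[of b a c] s01[of b c a] by (intro exI[of _ c] exI[of _ b] exI[of _ a]) auto
  qed
qed

lemma lower_all:
  assumes n: "2 \<le> n" and L: "L \<in> {L. length L = 3 \<and> (\<forall>a\<in>set L. 0 < a) \<and> UD n L \<noteq> {}}"
  shows "alpha n \<le> rho n L"
proof -
  obtain a b c where abc: "L = [a,b,c]" using L by (auto simp: numeral_3_eq_3 length_Suc_conv)
  have pos: "0 < a" "0 < b" "0 < c" using L abc by auto
  have "card (UD n [a,b,c]) > 0" using L abc finite_UD by (auto simp: card_gt_0_iff)
  obtain a' b' c' where s: "0 < a'" "a' \<le> b'" "b' \<le> c'" "card (UD n [a,b,c]) = card (UD n [a',b',c'])"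
    "rho n [a,b,c] = rho n [a',b',c']" using sort3[OF pos, of n] by blast
  have "alpha n \<le> rho n [a',b',c']"
    by (rule lower_sorted[OF n s(1-3)]) (use s(4) \<open>card (UD n [a,b,c]) > 0\<close> in simp)
  thus ?thesis using s(5) abc by simp
qed

lemma upper3:
  assumes n: "3 \<le> n" and e: "0 < e"
  shows "\<exists>L\<in>{L. length L = 3 \<and> (\<forall>a\<in>set L. 0 < a) \<and> UD n L \<noteq> {}}. rho n L < alpha n + e"
proof -
  define N where "N = real n"
  have N: "N \<ge> 3" using n unfolding N_def by simp
  define d where "d = min (1/2) (e/2)"
  have d: "0 < d" "d \<le> 1/2" "d \<le> e/2" using e unfolding d_def by auto
  have "2/N < 1" using N by simp
  from real_arch_pow_inv[OF d(1) this] obtain c where c: "(2/N)^c < d" by blast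
  have c0: "0 < c" using c d by (cases c) auto
  define M where "M = N^c"
  define T where "T = (2::real)^c"
  have M: "M > 0" unfolding M_def using N by simp
  have TM: "T = (2/N)^c * M" unfolding T_def M_def using N by (simp add: power_divide)
  have Tlt: "T < d * M" using TM c M by simp
  have T0: "0 \<le> T" unfolding T_def by simp
  have P: "real (card (PR n [1,1,c])) = M * (N - 1) * (N - 2)"
  proof -
    have e1: "N*(1-1/N) = N-1" using N by (simp add: field_simps)
    have e2: "N*(1-1/N-1/N) = N-2" using N by (simp add: field_simps)
    have "real (card (PR n [1,1,c])) = N*N*N^c*(1-1/N)*(1-1/N-1/N)"
      using P_real[of n 1 1 c] n c0 unfolding N_def by simp
    also have "\<dots> = N^c*(N*(1-1/N))*(N*(1-1/N-1/N))" by (simp only: mult.assoc mult.commute mult.left_commute)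
    finally show ?thesis unfolding e1 e2 M_def .
  qed
  have le: "2^c \<le> n^c" using n by (intro power_mono) auto
  have U: "real (card (UD n [1,1,c])) = N * (N - 1) * (M - T)"
    unfolding card_UD11[OF c0] N_def M_def T_def using le n by (simp add: of_nat_diff)
  have "d * M \<le> 1/2 * M" using d M by (intro mult_right_mono) auto
  hence MT: "M - T > M / 2" using Tlt by linarith
  have Upos: "real (card (UD n [1,1,c])) > 0" unfolding U using N MT M by simp
  have al: "alpha n = (N - 2) / N" using n unfolding alpha_def N_def by simp
  have key: "(N - 2) * T < e * N * (M - T)"
  proof -
    have "(N - 2) * T \<le> N * T" using T0 by (simp add: mult_right_mono)
    also have "\<dots> < N * (d * M)" using Tlt N by simp
    also have "\<dots> \<le> N * (e/2 * M)" using d M N by (intro mult_left_mono mult_right_mono) auto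
    also have "\<dots> = e * N * (M / 2)" by simp
    also have "\<dots> < e * N * (M - T)" using MT e N by simp
    finally show ?thesis .
  qed
  have "real (card (PR n [1,1,c])) < (alpha n + e) * real (card (UD n [1,1,c]))"
  proof -
    have aN: "(N - 2) / N * N = N - 2" using N by simp
    have "(alpha n + e) * real (card (UD n [1,1,c])) = ((N - 2) / N * N) * (N - 1) * (M - T) + e * N * (N - 1) * (M - T)"
      unfolding U al by (simp only: algebra_simps)
    also have "\<dots> = (N - 2) * (N - 1) * (M - T) + e * N * (N - 1) * (M - T)" unfolding aN ..
    finally have "(alpha n + e) * real (card (UD n [1,1,c])) - real (card (PR n [1,1,c])) = (N - 1) * (e * N * (M - T) - (N - 2) * T)"
      unfolding P by (simp add: algebra_simps)
    moreover have "(N - 1) * (e * N * (M - T) - (N - 2) * T) > 0" using key N by simp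
    ultimately show ?thesis by linarith
  qed
  hence "rho n [1,1,c] < alpha n + e" unfolding rho_def using Upos by (simp add: divide_less_eq)
  moreover have "UD n [1,1,c] \<noteq> {}" using Upos by auto
  ultimately show ?thesis using c0 by (intro bexI[of _ "[1,1,c]"]) auto
qed

lemma upper2:
  assumes e: "0 < e"
  shows "\<exists>L\<in>{L. length L = 3 \<and> (\<forall>a\<in>set L. 0 < a) \<and> UD 2 L \<noteq> {}}. rho 2 L < alpha 2 + e"
proof -
  define d where "d = min (1/4) (e/4)"
  have d: "0 < d" "d \<le> 1/4" "d \<le> e/4" using e unfolding d_def by auto
  have "(7/8::real) < 1" by simp
  from real_arch_pow_inv[OF d(1) this] obtain c0 where c0: "(7/8::real)^c0 < d" by blast
  define c where "c = c0 + 2"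
  have c2: "2 \<le> c" unfolding c_def by simp
  have "(7/8::real)^c \<le> (7/8)^c0" unfolding c_def by (intro power_decreasing) auto
  hence cd: "(7/8::real)^c < d" using c0 by linarith
  define M where "M = (2::real)^c"
  define T where "T = (7/4::real)^c"
  have M: "M > 0" unfolding M_def by simp
  have TM: "T = (7/8)^c * M" unfolding T_def M_def by (simp add: power_mult_distrib[symmetric])
  have Tlt: "T < d * M" using TM cd M by simp
  have T0: "0 \<le> T" unfolding T_def by simp
  have P: "real (card (PR 2 [1,2,c])) = M"
    using P_real[of 2 1 2 c] c2 unfolding M_def by (simp add: field_simps)
  have U: "real (card (UD 2 [1,2,c])) \<ge> 6 * (M - 2 * T)"
    using card_UD12_ge[of c] c2 unfolding M_def T_def by simp
  have "d * M \<le> 1/4 * M" using d M by (intro mult_right_mono) auto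
  hence MT: "M - 2 * T > M / 2" using Tlt by linarith
  have "6 * (M - 2 * T) > 0" using MT M by simp
  hence Upos: "real (card (UD 2 [1,2,c])) > 0" using U by linarith
  have "(1/6 + e) * (6 * (M - 2 * T)) - M = 6 * e * M - 2 * T - 12 * e * T" by (simp add: field_simps)
  also have "\<dots> > 0"
  proof -
    have "2 * T \<le> 2 * (d * M)" using Tlt by simp
    also have "\<dots> \<le> 2 * (e/4 * M)" using d M by (intro mult_left_mono mult_right_mono) auto
    finally have a1: "2 * T \<le> e/2 * M" by (simp add: mult.commute)
    have "12 * e * T \<le> 12 * e * (d * M)" using Tlt e by (intro mult_left_mono) auto
    also have "\<dots> \<le> 12 * e * (1/4 * M)" using d M e by (intro mult_left_mono mult_right_mono) auto
    finally have a2: "12 * e * T \<le> 3 * e * M" by simp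
    have "0 < e * M" using e M by simp
    thus ?thesis using a1 a2 by linarith
  qed
  finally have "M < (1/6 + e) * (6 * (M - 2 * T))" by simp
  also have "\<dots> \<le> (1/6 + e) * real (card (UD 2 [1,2,c]))" using U e by (intro mult_left_mono) auto
  finally have "real (card (PR 2 [1,2,c])) < (alpha 2 + e) * real (card (UD 2 [1,2,c]))"
    unfolding P alpha_def by simp
  hence "rho 2 [1,2,c] < alpha 2 + e" unfolding rho_def using Upos by (simp add: divide_less_eq)
  moreover have "UD 2 [1,2,c] \<noteq> {}" using Upos by auto
  ultimately show ?thesis using c2 by (intro bexI[of _ "[1,2,c]"]) auto
qed

theorem mainTheorem4:
  fixes n :: nat
  assumes "n \<ge> 2"
  shows "(INF L \<in> {L. length L = 3 \<and> (\<forall>a\<in>set L. 0 < a) \<and> UD n L \<noteq> {}}. rho n L) = alpha n"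
proof -
  let ?S = "{L. length L = 3 \<and> (\<forall>a\<in>set L. 0 < a) \<and> UD n L \<noteq> {}}"
  have up: "\<exists>L\<in>?S. rho n L < alpha n + e" if "0 < e" for e
  proof (cases "n = 2")
    case True thus ?thesis using upper2[OF that] by simp
  next
    case False thus ?thesis using upper3[OF _ that] assms by simp
  qed
  have ne: "?S \<noteq> {}" using up[of 1] by auto
  have lo: "\<And>L. L \<in> ?S \<Longrightarrow> alpha n \<le> rho n L" using lower_all[OF assms] by blast
  have bdd: "bdd_below (rho n ` ?S)" by (rule bdd_belowI2) (erule lo)
  have g: "alpha n \<le> (INF L \<in> ?S. rho n L)" by (rule cINF_greatest[OF ne lo])
  have l: "(INF L \<in> ?S. rho n L) \<le> alpha n"
  proof (rule ccontr)
    assume "\<not> (INF L \<in> ?S. rho n L) \<le> alpha n"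
    hence "0 < (INF L \<in> ?S. rho n L) - alpha n" by simp
    from up[OF this] obtain L where L: "L \<in> ?S" "rho n L < (INF L \<in> ?S. rho n L)" by auto
    have "(INF L \<in> ?S. rho n L) \<le> rho n L" by (rule cINF_lower[OF bdd L(1)])
    thus False using L(2) by simp
  qed
  show ?thesis using g l by simp
qed


end
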